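(* Let $k$ be a positive integer, $S=\{3k,3k+1,6k-1\}$ and $G=\langle S\rangle$. For $i\in\mathbb{N}$ let $A_{i,k}=[(2i)3k-i,\,(2i)3k+2i]$ and $B_{i,k}=[(2i+1)3k-i,\,(2i+1)3k+2i+1]$, and let $H_{1,k}=\bigcup_{i\in\mathbb{N}}(A_{i,k}\cup B_{i,k})$. Then: (1) $H_{1,k}$ is a submonoid of $(\mathbb{N},+,0)$ containing $S$; (2) $A_{i,k}<B_{i,k}$ for every $i\in[0,k-1]$; (3) $B_{i,k}<A_{i+1,k}$ for every $i\in[0,k-1]$; (4) $[(2(k-1)+1)3k-(k-1),\infty[\ \subseteq H_{1,k}$; (5) $G=H_{1,k}$; (6) $H_{1,k}$ is a $3$-permutation numerical semigroup.
   Context: $\mathbb{N}=\{0,1,2,\dots\}$. A numerical semigroup is a submonoid $G$ of $(\mathbb{N},+,0)$ with $\mathbb{N}\setminus G$ finite; $\langle S\rangle$ is the submonoid generated by $S$. Writing the elements of a numerical semigroup $G$ as $0=g_0<g_1<g_2<\cdots$, $G$ is an $n$-permutation numerical semigroup if $G=\langle\{g_1,\dots,g_n\}\rangle$ and for every $k\in\mathbb{N}$ the tuple $(g_{kn+1}\bmod n,\dots,g_{kn+n}\bmod n)$ contains exactly one representative of each residue class mod $n$. Notation: $[a,b]=\{x\in\mathbb{N}:a\le x\le b\}$, $[a,\infty[=\{x\in\mathbb{N}:x\ge a\}$. For nonempty $A,B\subseteq\mathbb{N}$, $A<B$ means $x<y$ for all $x\in A$, $y\in B$. *)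

theory Defs
  imports Main "HOL-Library.Infinite_Set"
begin

definition submonoid_nat :: "nat set \<Rightarrow> bool" where
  "submonoid_nat M \<longleftrightarrow> 0 \<in> M \<and> (\<forall>x\<in>M. \<forall>y\<in>M. x + y \<in> M)"

definition gen :: "nat set \<Rightarrow> nat set" where
  "gen S = \<Inter> {M. submonoid_nat M \<and> S \<subseteq> M}"

definition numerical_semigroup :: "nat set \<Rightarrow> bool" where
  "numerical_semigroup G \<longleftrightarrow> submonoid_nat G \<and> finite (UNIV - G)"

text \<open>g_i = enumerate G i, the i-th element of G in increasing order (g_0 = 0).\<close>
definition perm_ns :: "nat \<Rightarrow> nat set \<Rightarrow> bool" where
  "perm_ns n G \<longleftrightarrow> numerical_semigroup G \<and>
     G = gen (enumerate G ` {1..n}) \<and>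
     (\<forall>k::nat. bij_betw (\<lambda>j. enumerate G (k * n + j) mod n) {1..n} {0..<n})"

definition set_less :: "nat set \<Rightarrow> nat set \<Rightarrow> bool" where
  "set_less A B \<longleftrightarrow> A \<noteq> {} \<and> B \<noteq> {} \<and> (\<forall>x\<in>A. \<forall>y\<in>B. x < y)"

definition A_int :: "nat \<Rightarrow> nat \<Rightarrow> nat set" where
  "A_int i k = {(2*i)*(3*k) - i .. (2*i)*(3*k) + 2*i}"

definition B_int :: "nat \<Rightarrow> nat \<Rightarrow> nat set" where
  "B_int i k = {(2*i+1)*(3*k) - i .. (2*i+1)*(3*k) + 2*i + 1}"

definition H1 :: "nat \<Rightarrow> nat set" where
  "H1 k = (\<Union>i. A_int i k \<union> B_int i k)"

end

theory Submission
  imports Defs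
begin


lemma memA: "x \<in> A_int i k \<longleftrightarrow> 6*(k*i) \<le> x + i \<and> x \<le> 6*(k*i) + 2*i"
proof -
  have "(2*i)*(3*k) = 6*(k*i)" by simp
  then show ?thesis unfolding A_int_def atLeastAtMost_iff unfolding distrib_left mult_Suc_right by linarith
qed

lemma memB: "x \<in> B_int i k \<longleftrightarrow> 6*(k*i) + 3*k \<le> x + i \<and> x \<le> 6*(k*i) + 3*k + 2*i + 1"
proof -
  have "(2*i+1)*(3*k) = 6*(k*i) + 3*k" by (simp add: algebra_simps)
  then show ?thesis unfolding B_int_def atLeastAtMost_iff unfolding distrib_left mult_Suc_right by linarith
qed

lemma memH: "x \<in> H1 k \<longleftrightarrow> (\<exists>i. x \<in> A_int i k \<or> x \<in> B_int i k)"
  unfolding H1_def by auto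

lemma monoL: "(k::nat) \<ge> 1 \<Longrightarrow> i \<le> j \<Longrightarrow> 6*(k*i) + j \<le> 6*(k*j) + i"
proof -
  assume k: "k \<ge> 1" and ij: "i \<le> j"
  then obtain d where d: "j = i + d" using le_Suc_ex by blast
  have "d \<le> k*d" using k by simp
  moreover have "k*j = k*i + k*d" using d by (simp add: algebra_simps)
  ultimately show ?thesis using d unfolding distrib_left mult_Suc_right by linarith
qed

lemma monoR: "(i::nat) \<le> j \<Longrightarrow> k*i \<le> k*j" by (rule mult_le_mono2)

lemma linAA: "6*P \<le> x + i \<Longrightarrow> x \<le> 6*P+2*i \<Longrightarrow> 6*Q \<le> y+j \<Longrightarrow> y \<le> 6*Q+2*j
  \<Longrightarrow> 6*(P+Q) \<le> x+y+(i+j) \<and> x+y \<le> 6*(P+Q)+2*(i+j)" for P Q x y i j :: nat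
  unfolding distrib_left mult_Suc_right by linarith

lemma linAB: "6*P \<le> x + i \<Longrightarrow> x \<le> 6*P+2*i \<Longrightarrow> 6*Q+3*k \<le> y+j \<Longrightarrow> y \<le> 6*Q+3*k+2*j+1
  \<Longrightarrow> 6*(P+Q)+3*k \<le> x+y+(i+j) \<and> x+y \<le> 6*(P+Q)+3*k+2*(i+j)+1" for P Q x y i j k :: nat
  unfolding distrib_left mult_Suc_right by linarith

lemma linBB: "6*P+3*k \<le> x + i \<Longrightarrow> x \<le> 6*P+3*k+2*i+1 \<Longrightarrow> 6*Q+3*k \<le> y+j \<Longrightarrow> y \<le> 6*Q+3*k+2*j+1
  \<Longrightarrow> 6*(P+Q+k) \<le> x+y+(i+j+1) \<and> x+y \<le> 6*(P+Q+k)+2*(i+j+1)" for P Q x y i j k :: nat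
  unfolding distrib_left mult_Suc_right by linarith

lemma H_add: assumes "x \<in> H1 k" "y \<in> H1 k" shows "x + y \<in> H1 k"
proof -
  obtain i where i: "x \<in> A_int i k \<or> x \<in> B_int i k" using assms(1) memH by blast
  obtain j where j: "y \<in> A_int j k \<or> y \<in> B_int j k" using assms(2) memH by blast
  have e1: "k*(i+j) = k*i + k*j" by (simp add: algebra_simps)
  have e2: "k*(i+j+1) = k*i + k*j + k" by (simp add: algebra_simps)
  have "x + y \<in> A_int (i+j) k \<or> x + y \<in> B_int (i+j) k \<or> x + y \<in> A_int (i+j+1) k"
  proof (cases "x \<in> A_int i k")
    case xa: True
    show ?thesis
    proof (cases "y \<in> A_int j k")
      case True
      then show ?thesis using xa linAA[of "k*i" x i "k*j" y j] unfolding memA e1 by blast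
    next
      case False
      then have "y \<in> B_int j k" using j by blast
      then show ?thesis using xa linAB[of "k*i" x i "k*j" k y j] unfolding memA memB e1 by blast
    qed
  next
    case xb0: False
    then have xb: "x \<in> B_int i k" using i by blast
    show ?thesis
    proof (cases "y \<in> A_int j k")
      case True
      then show ?thesis using xb linAB[of "k*j" y j "k*i" k x i] unfolding memA memB e1
        by (simp add: add.commute add.left_commute)
    next
      case False
      then have "y \<in> B_int j k" using j by blast
      then show ?thesis using xb linBB[of "k*i" k x i "k*j" y j] unfolding memA memB e2 by blast
    qed
  qed
  then show ?thesis using memH by blast
qed

lemma H_sub: "submonoid_nat (H1 k)"
proof -
  have "0 \<in> A_int 0 k" by (simp add: memA)
  then show ?thesis unfolding submonoid_nat_def using memH H_add by blast
qed

lemma linL4a: "K1 = K + k \<Longrightarrow> Suc p = k \<Longrightarrow> p \<le> m \<Longrightarrow> \<not> x \<le> 6*K+3*k+2*m+1 \<Longrightarrow> x \<le> 6*K1 + 2*Suc m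
   \<Longrightarrow> 6*K1 \<le> x + Suc m" for K K1 k p m x :: nat unfolding distrib_left mult_Suc_right by linarith

lemma linL4b: "K1 = K + k \<Longrightarrow> Suc p = k \<Longrightarrow> p \<le> m \<Longrightarrow> \<not> x \<le> 6*K1 + 2*Suc m
   \<Longrightarrow> 6*K1 + 3*k \<le> x + Suc m" for K K1 k p m x :: nat unfolding distrib_left mult_Suc_right by linarith

lemma L4: assumes "p \<le> m" shows "Suc p = k \<Longrightarrow> 6*(k*p) + 3*k \<le> x + p \<Longrightarrow> x \<le> 6*(k*m)+3*k+2*m+1 \<Longrightarrow> x \<in> H1 k"
  using assms
proof (induction m arbitrary: x rule: dec_induct)
  case base
  then have "x \<in> B_int p k" by (simp add: memB)
  then show ?case using memH by blast
next
  case (step m)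
  have e: "k*(Suc m) = k*m + k" by simp
  show ?case
  proof (cases "x \<le> 6*(k*m)+3*k+2*m+1")
    case True then show ?thesis using step by blast
  next
    case F1: False
    show ?thesis
    proof (cases "x \<le> 6*(k*Suc m) + 2*Suc m")
      case True
      then have "x \<in> A_int (Suc m) k" using linL4a[OF e step.prems(1) step.hyps(1) F1 True] True unfolding memA by blast
      then show ?thesis using memH by blast
    next
      case False
      then have "x \<in> B_int (Suc m) k" using linL4b[OF e step.prems(1) step.hyps(1) False] step.prems(3) unfolding memB by blast
      then show ?thesis using memH by blast
    qed
  qed
qed

lemma part4: assumes "k \<ge> 1" "x \<ge> (2*(k-1)+1)*(3*k) - (k-1)" shows "x \<in> H1 k"
proof -
  obtain p where p: "k = Suc p" using assms(1) by (cases k) auto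
  have e: "(2*(k-1)+1)*(3*k) = 6*(k*p) + 3*k" using p by (simp add: algebra_simps)
  have "x + p \<le> k*(x+p)" using assms(1) by simp
  then show ?thesis using L4[of p "x+p" k x] p assms(2) e unfolding distrib_left mult_Suc_right by linarith
qed


lemma gen_mem: "x \<in> gen S \<longleftrightarrow> (\<forall>M. submonoid_nat M \<and> S \<subseteq> M \<longrightarrow> x \<in> M)"
  unfolding gen_def by blast

lemma sm_mult: "submonoid_nat M \<Longrightarrow> x \<in> M \<Longrightarrow> n*x \<in> M"
  by (induction n) (auto simp: submonoid_nat_def)

lemma sm_combo: assumes "submonoid_nat M" "{3*k, 3*k+1, 6*k-1} \<subseteq> M"
  shows "a*(3*k) + b*(3*k+1) + c*(6*k-1) \<in> M"
proof -
  have m: "3*k \<in> M" "3*k+1 \<in> M" "6*k-1 \<in> M" using assms(2) by auto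
  have "a*(3*k) \<in> M" "b*(3*k+1) \<in> M" "c*(6*k-1) \<in> M"
    using sm_mult[OF assms(1)] m by blast+
  then show ?thesis using assms(1) unfolding submonoid_nat_def by blast
qed

lemma aux6: "(k::nat) \<ge> 1 \<Longrightarrow> c*(6*k-1) + c = c*(6*k)"
proof -
  assume "k \<ge> 1"
  then have "6*k-1+1 = 6*k" by simp
  then show ?thesis by (metis add_mult_distrib2 mult_1_right)
qed

lemma repA: assumes k: "k \<ge> 1" and x: "x \<in> A_int i k"
  shows "\<exists>a b c. x = a*(3*k) + b*(3*k+1) + c*(6*k-1)"
proof (cases "6*(k*i) \<le> x")
  case True
  define d where "d = x - 6*(k*i)"
  define e where "e = 2*i - d"
  have de: "e + d = 2*i" using x True unfolding memA d_def e_def unfolding distrib_left mult_Suc_right by linarith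
  have "(e+d)*(3*k) = 6*(k*i)" using de by simp
  moreover have "e*(3*k) + d*(3*k+1) = (e+d)*(3*k) + d" by (simp add: algebra_simps)
  ultimately have "x = e*(3*k) + d*(3*k+1) + 0*(6*k-1)" using True unfolding d_def unfolding distrib_left mult_Suc_right by linarith
  then show ?thesis by blast
next
  case False
  define c where "c = 6*(k*i) - x"
  define e where "e = i - c"
  have ce: "e + c = i" using x False unfolding memA c_def e_def unfolding distrib_left mult_Suc_right by linarith
  have "(2*e)*(3*k) + c*(6*k) = 6*(k*i)" using ce[symmetric] by (simp add: algebra_simps)
  moreover have "c*(6*k-1) + c = c*(6*k)" using aux6 k by blast
  ultimately have "x = (2*e)*(3*k) + 0*(3*k+1) + c*(6*k-1)" using False unfolding c_def unfolding distrib_left mult_Suc_right by linarith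
  then show ?thesis by blast
qed

lemma repB: assumes k: "k \<ge> 1" and x: "x \<in> B_int i k"
  shows "\<exists>a b c. x = a*(3*k) + b*(3*k+1) + c*(6*k-1)"
proof (cases "6*(k*i) + 3*k \<le> x")
  case True
  define d where "d = x - (6*(k*i) + 3*k)"
  define e where "e = 2*i + 1 - d"
  have de: "e + d = 2*i+1" using x True unfolding memB d_def e_def unfolding distrib_left mult_Suc_right by linarith
  have "(e+d)*(3*k) = 6*(k*i) + 3*k" using de by (simp add: algebra_simps)
  moreover have "e*(3*k) + d*(3*k+1) = (e+d)*(3*k) + d" by (simp add: algebra_simps)
  ultimately have "x = e*(3*k) + d*(3*k+1) + 0*(6*k-1)" using True unfolding d_def unfolding distrib_left mult_Suc_right by linarith
  then show ?thesis by blast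
next
  case False
  define c where "c = 6*(k*i) + 3*k - x"
  define e where "e = i - c"
  have ce: "e + c = i" using x False unfolding memB c_def e_def unfolding distrib_left mult_Suc_right by linarith
  have "(2*e+1)*(3*k) + c*(6*k) = 6*(k*i) + 3*k" using ce[symmetric] by (simp add: algebra_simps)
  moreover have "c*(6*k-1) + c = c*(6*k)" using aux6 k by blast
  ultimately have "x = (2*e+1)*(3*k) + 0*(3*k+1) + c*(6*k-1)" using False unfolding c_def unfolding distrib_left mult_Suc_right by linarith
  then show ?thesis by blast
qed

lemma S_sub: assumes "k \<ge> 1" shows "{3*k, 3*k+1, 6*k-1} \<subseteq> H1 k"
proof -
  have "3*k \<in> B_int 0 k" "3*k+1 \<in> B_int 0 k" by (simp_all add: memB)
  moreover have "6*k-1 \<in> A_int 1 k" using assms by (simp add: memA)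
  ultimately show ?thesis using memH by blast
qed

lemma gen_eq: assumes "k \<ge> 1" shows "gen {3*k, 3*k+1, 6*k-1} = H1 k"
proof
  show "gen {3*k, 3*k+1, 6*k-1} \<subseteq> H1 k" using gen_mem H_sub S_sub[OF assms] by blast
next
  show "H1 k \<subseteq> gen {3*k, 3*k+1, 6*k-1}"
  proof
    fix x assume "x \<in> H1 k"
    then obtain i where "x \<in> A_int i k \<or> x \<in> B_int i k" using memH by blast
    then have "\<exists>a b c. x = a*(3*k) + b*(3*k+1) + c*(6*k-1)"
      using repA[OF assms] repB[OF assms] by blast
    then obtain a b c where x: "x = a*(3*k) + b*(3*k+1) + c*(6*k-1)" by blast
    show "x \<in> gen {3*k, 3*k+1, 6*k-1}" unfolding gen_mem x using sm_combo by blast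
  qed
qed



lemma enum_next:
  assumes "infinite (S::nat set)" "enumerate S n = a" "c \<in> S" "a < c" "\<forall>y. a < y \<and> y < c \<longrightarrow> y \<notin> S"
  shows "enumerate S (Suc n) = c"
proof -
  have "(LEAST s. s \<in> S \<and> a < s) = c"
  proof (rule Least_equality)
    show "c \<in> S \<and> a < c" using assms by blast
    fix y assume "y \<in> S \<and> a < y"
    then show "c \<le> y" using assms(5) not_less by blast
  qed
  then show ?thesis using enumerate_Suc''[OF assms(1), of n] assms(2) by simp
qed

lemma enum_int:
  assumes "infinite (S::nat set)" "enumerate S n = a" "{a..a+j} \<subseteq> S"
  shows "enumerate S (n+j) = a+j"
  using assms(3)
proof (induction j)
  case 0 then show ?case using assms(2) by simp
next
  case (Suc j)
  have "{a..a+j} \<subseteq> S" using Suc.prems by auto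
  then have IH: "enumerate S (n+j) = a+j" by (rule Suc.IH)
  have "a + Suc j \<in> S" using Suc.prems by auto
  moreover have "\<forall>y. a+j < y \<and> y < a + Suc j \<longrightarrow> y \<notin> S" by auto
  ultimately show ?case using enum_next[OF assms(1) IH] by simp
qed

lemma H_inf: assumes "k \<ge> 1" shows "infinite (H1 k)"
proof
  assume "finite (H1 k)"
  then obtain M where M: "\<forall>x\<in>H1 k. x \<le> M" using finite_nat_set_iff_bounded_le by blast
  have "(2*(k-1)+1)*(3*k) - (k-1) \<le> M + (2*(k-1)+1)*(3*k) + 1" by (rule le_trans[OF diff_le_self]) simp
  then have "M + (2*(k-1)+1)*(3*k) + 1 \<in> H1 k" by (rule part4[OF assms])
  then have "M + (2*(k-1)+1)*(3*k) + 1 \<le> M" using M by blast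
  then show False by simp
qed

lemma gap1: assumes k: "k \<ge> 1" and i: "i < k" and y: "6*(k*i)+2*i < y" "y + i < 6*(k*i)+3*k"
  shows "y \<notin> H1 k"
proof
  assume "y \<in> H1 k"
  then obtain j where j: "y \<in> A_int j k \<or> y \<in> B_int j k" using memH by blast
  have e: "k*(i+1) = k*i + k" by simp
  show False
  proof (cases "j \<le> i")
    case True
    have "k*j \<le> k*i" using True by (rule monoR)
    show False
    proof (cases "j = i")
      case True then have "y \<in> A_int i k \<or> y \<in> B_int i k" using j by simp
      then show False using y unfolding memA memB by linarith
    next
      case False
      then have "j + 1 \<le> i" using \<open>j \<le> i\<close> unfolding distrib_left mult_Suc_right by linarith
      then have "k*(j+1) \<le> k*i" by (rule monoR)
      moreover have "k*(j+1) = k*j + k" by simp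
      ultimately show False using j y \<open>k*j \<le> k*i\<close> \<open>j + 1 \<le> i\<close> unfolding memA memB unfolding distrib_left mult_Suc_right by linarith
    qed
  next
    case False
    then have "i + 1 \<le> j" unfolding distrib_left mult_Suc_right by linarith
    have m1: "6*(k*(i+1)) + j \<le> 6*(k*j) + (i+1)" using monoL[OF k \<open>i+1 \<le> j\<close>] .
    have m2: "6*(k*i) + j \<le> 6*(k*j) + i" using monoL[OF k] \<open>i+1 \<le> j\<close> by simp
    show False using j y m1 m2 e k unfolding memA memB unfolding distrib_left mult_Suc_right by linarith
  qed
qed

lemma gap2: assumes k: "k \<ge> 1" and i: "i < k" and y: "6*(k*i)+3*k+2*i+1 < y" "y + (i+1) < 6*(k*(i+1))"
  shows "y \<notin> H1 k"
proof
  assume "y \<in> H1 k"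
  then obtain j where j: "y \<in> A_int j k \<or> y \<in> B_int j k" using memH by blast
  have e: "k*(i+1) = k*i + k" by simp
  show False
  proof (cases "j \<le> i")
    case True
    have "k*j \<le> k*i" using True by (rule monoR)
    then show False using j y True unfolding memA memB unfolding distrib_left mult_Suc_right by linarith
  next
    case False
    then have "i + 1 \<le> j" unfolding distrib_left mult_Suc_right by linarith
    have m1: "6*(k*(i+1)) + j \<le> 6*(k*j) + (i+1)" using monoL[OF k \<open>i+1 \<le> j\<close>] .
    show False using j y m1 e k unfolding memA memB unfolding distrib_left mult_Suc_right by linarith
  qed
qed

lemma PtoQ: assumes k: "k \<ge> 1" and i: "i < k"
  and P: "enumerate (H1 k) (3*(i*i)) = 6*(k*i) - i"
  shows "enumerate (H1 k) (3*(i*i)+3*i+1) = 6*(k*i)+3*k - i"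
proof -
  have inf: "infinite (H1 k)" using H_inf[OF k] .
  have ki: "i \<le> k*i" using k by simp
  obtain a where a: "6*(k*i) = a + i" using ki le_Suc_ex[of i "6*(k*i)"] by (auto simp: add.commute)
  have s1: "6*(k*i) - i = a" using a by simp
  have s2: "6*(k*i) + 3*k - i = a + 3*k" using a by simp
  have P': "enumerate (H1 k) (3*(i*i)) = a" using P s1 by simp
  have "{a .. a + 3*i} \<subseteq> H1 k"
  proof
    fix x assume "x \<in> {a .. a + 3*i}"
    then have "x \<in> A_int i k" unfolding memA atLeastAtMost_iff using a by linarith
    then show "x \<in> H1 k" using memH by blast
  qed
  from enum_int[OF inf P' this]
  have a1: "enumerate (H1 k) (3*(i*i) + 3*i) = a + 3*i" .
  have b: "a + 3*k \<in> H1 k"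
  proof -
    have "a + 3*k \<in> B_int i k" unfolding memB using a by linarith
    then show ?thesis using memH by blast
  qed
  have lt: "a + 3*i < a + 3*k" using i by linarith
  have gap: "\<forall>y. a + 3*i < y \<and> y < a + 3*k \<longrightarrow> y \<notin> H1 k"
  proof (intro allI impI)
    fix y assume "a + 3*i < y \<and> y < a + 3*k"
    then have "6*(k*i)+2*i < y" "y + i < 6*(k*i)+3*k" using a by linarith+
    then show "y \<notin> H1 k" using gap1[OF k i] by blast
  qed
  show ?thesis using enum_next[OF inf a1 b lt gap] s2 by simp
qed

lemma QtoP: assumes k: "k \<ge> 1" and i: "i < k"
  and Q: "enumerate (H1 k) (3*(i*i)+3*i+1) = 6*(k*i)+3*k - i"
  shows "enumerate (H1 k) (3*((i+1)*(i+1))) = 6*(k*(i+1)) - (i+1)"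
proof -
  have inf: "infinite (H1 k)" using H_inf[OF k] .
  have ki: "i \<le> k*i" using k by simp
  obtain a where a: "6*(k*i) = a + i" using ki le_Suc_ex[of i "6*(k*i)"] by (auto simp: add.commute)
  have e: "k*(i+1) = k*i + k" by simp
  have s2: "6*(k*i) + 3*k - i = a + 3*k" using a by simp
  have s3: "6*(k*(i+1)) - (i+1) = a + 6*k - 1" using a e by simp
  have Q': "enumerate (H1 k) (3*(i*i)+3*i+1) = a + 3*k" using Q s2 by simp
  have "{a + 3*k .. a + 3*k + (3*i+1)} \<subseteq> H1 k"
  proof
    fix x assume "x \<in> {a + 3*k .. a + 3*k + (3*i+1)}"
    then have "x \<in> B_int i k" unfolding memB atLeastAtMost_iff using a by linarith
    then show "x \<in> H1 k" using memH by blast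
  qed
  from enum_int[OF inf Q' this]
  have a1: "enumerate (H1 k) (3*(i*i)+3*i+1 + (3*i+1)) = a + 3*k + (3*i+1)" .
  have b: "a + 6*k - 1 \<in> H1 k"
  proof -
    have "a + 6*k - 1 \<in> A_int (i+1) k" unfolding memA using e k a by linarith
    then show ?thesis using memH by blast
  qed
  have lt: "a + 3*k + (3*i+1) < a + 6*k - 1" using i by linarith
  have gap: "\<forall>y. a + 3*k + (3*i+1) < y \<and> y < a + 6*k - 1 \<longrightarrow> y \<notin> H1 k"
  proof (intro allI impI)
    fix y assume "a + 3*k + (3*i+1) < y \<and> y < a + 6*k - 1"
    then have "6*(k*i)+3*k+2*i+1 < y" "y + (i+1) < 6*(k*(i+1))" using a e by linarith+
    then show "y \<notin> H1 k" using gap2[OF k i] by blast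
  qed
  have idx: "Suc (3*(i*i)+3*i+1 + (3*i+1)) = 3*((i+1)*(i+1))" by (simp add: algebra_simps)
  have r: "enumerate (H1 k) (Suc (3*(i*i)+3*i+1 + (3*i+1))) = a + 6*k - 1"
    by (rule enum_next[OF inf a1 b lt gap])
  show ?thesis using r unfolding idx s3 .
qed

lemma Pval: assumes k: "k \<ge> 1" shows "i \<le> k \<Longrightarrow> enumerate (H1 k) (3*(i*i)) = 6*(k*i) - i"
proof (induction i)
  case 0
  have "0 \<in> A_int 0 k" by (simp add: memA)
  then have "0 \<in> H1 k" using memH by blast
  then show ?case by (simp add: enumerate_0 Least_eq_0)
next
  case (Suc i)
  then have "i < k" by simp
  then show ?case using Suc PtoQ[OF k] QtoP[OF k] by simp
qed

lemma Qval: assumes k: "k \<ge> 1" and i: "i < k" shows "enumerate (H1 k) (3*(i*i)+3*i+1) = 6*(k*i)+3*k - i"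
  using PtoQ[OF k i] Pval[OF k] i by simp

lemma valA: assumes k: "k \<ge> 1" and i: "i \<le> k" and t: "t \<le> 3*i"
  shows "enumerate (H1 k) (3*(i*i) + t) = 6*(k*i) - i + t"
proof -
  have ki: "i \<le> k*i" using k by simp
  obtain a where a: "6*(k*i) = a + i" using ki le_Suc_ex[of i "6*(k*i)"] by (auto simp: add.commute)
  have s1: "6*(k*i) - i = a" using a by simp
  have "{a .. a + t} \<subseteq> H1 k"
  proof
    fix x assume "x \<in> {a .. a + t}"
    then have "x \<in> A_int i k" unfolding memA atLeastAtMost_iff using t a by linarith
    then show "x \<in> H1 k" using memH by blast
  qed
  moreover have "enumerate (H1 k) (3*(i*i)) = a" using Pval[OF k i] s1 by simp
  ultimately show ?thesis using enum_int[OF H_inf[OF k]] unfolding s1 by blast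
qed

lemma valB: assumes k: "k \<ge> 1" and i: "i < k" and t: "t \<le> 3*i+1"
  shows "enumerate (H1 k) (3*(i*i)+3*i+1 + t) = 6*(k*i)+3*k - i + t"
proof -
  have ki: "i \<le> k*i" using k by simp
  obtain a where a: "6*(k*i) = a + i" using ki le_Suc_ex[of i "6*(k*i)"] by (auto simp: add.commute)
  have s2: "6*(k*i) + 3*k - i = a + 3*k" using a by simp
  have "{a + 3*k .. a + 3*k + t} \<subseteq> H1 k"
  proof
    fix x assume "x \<in> {a + 3*k .. a + 3*k + t}"
    then have "x \<in> B_int i k" unfolding memB atLeastAtMost_iff using t a by linarith
    then show "x \<in> H1 k" using memH by blast
  qed
  moreover have "enumerate (H1 k) (3*(i*i)+3*i+1) = a + 3*k" using Qval[OF k i] s2 by simp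
  ultimately show ?thesis using enum_int[OF H_inf[OF k]] unfolding s2 by blast
qed

lemma valT: assumes k: "k \<ge> 1"
  shows "enumerate (H1 k) (3*(k*k) + t) = 6*(k*k) - k + t"
proof -
  have "{6*(k*k) - k .. 6*(k*k) - k + t} \<subseteq> H1 k"
  proof
    fix x assume x: "x \<in> {6*(k*k) - k .. 6*(k*k) - k + t}"
    obtain p where p: "k = Suc p" using k by (cases k) auto
    have "(2*(k-1)+1)*(3*k) - (k-1) = 6*(k*k) - 4*k + 1" using p by (simp add: algebra_simps)
    then have "(2*(k-1)+1)*(3*k) - (k-1) \<le> x" using x k by auto
    then show "x \<in> H1 k" using part4[OF k] by blast
  qed
  then show ?thesis using enum_int[OF H_inf[OF k] Pval[OF k, of k]] by simp
qed



lemma bij3: "bij_betw (\<lambda>j. (j + c) mod 3) {1..3::nat} {0..<3}"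
proof -
  have e: "(\<lambda>j. (j+c) mod 3) = (\<lambda>j. (j + c mod 3) mod 3)" by (simp add: mod_add_right_eq)
  have s: "{1..3::nat} = {1,2,3}" "{0..<3::nat} = {0,1,2}" by auto
  have "c mod 3 = 0 \<or> c mod 3 = 1 \<or> c mod 3 = 2" by arith
  then show ?thesis unfolding e s by (elim disjE) (auto simp add: bij_betw_def inj_on_def)
qed

lemma block_ok:
  fixes G :: "nat set" and c :: nat
  assumes "enumerate G (m*3+1) mod 3 = (1 + c) mod 3" "enumerate G (m*3+2) mod 3 = (2 + c) mod 3"
    "enumerate G (m*3+3) mod 3 = (3 + c) mod 3"
  shows "bij_betw (\<lambda>j. enumerate G (m*3+j) mod 3) {1..3::nat} {0..<3}"
proof -
  have s: "{1..3::nat} = {1,2,3}" by auto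
  have "bij_betw (\<lambda>j. enumerate G (m*3+j) mod 3) {1..3::nat} {0..<3} = bij_betw (\<lambda>j. (j + c) mod 3) {1..3::nat} {0..<3}"
  proof (rule bij_betw_cong)
    fix j :: nat assume "j \<in> {1..3}"
    then have "j = 1 \<or> j = 2 \<or> j = 3" by auto
    then show "enumerate G (m*3+j) mod 3 = (j + c) mod 3"
    proof (elim disjE)
      assume "j = 1" then show ?thesis using assms(1) by simp
    next
      assume "j = 2" then show ?thesis using assms(2) by simp
    next
      assume "j = 3" then show ?thesis using assms(3) by simp
    qed
  qed
  then show ?thesis using bij3[of c] by simp
qed

lemma consec:
  fixes G :: "nat set" and b :: nat
  assumes "enumerate G (m*3+1) = b+1" "enumerate G (m*3+2) = b+2" "enumerate G (m*3+3) = b+3"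
  shows "bij_betw (\<lambda>j. enumerate G (m*3+j) mod 3) {1..3::nat} {0..<3}"
proof (rule block_ok[of G m b])
  show "enumerate G (m*3+1) mod 3 = (1 + b) mod 3" unfolding assms(1) by (simp add: add.commute)
  show "enumerate G (m*3+2) mod 3 = (2 + b) mod 3" unfolding assms(2) by (simp add: add.commute)
  show "enumerate G (m*3+3) mod 3 = (3 + b) mod 3" unfolding assms(3) by (simp add: add.commute)
qed

lemma mod3: "x = z + 3*u \<Longrightarrow> y = z + 3*v \<Longrightarrow> x mod 3 = (y::nat) mod 3" by simp

lemma sqrt_ex: "\<exists>i. i*i \<le> (m::nat) \<and> m < Suc i * Suc i"
proof (induction m)
  case 0 then show ?case by (rule exI[of _ 0]) simp
next
  case (Suc m)
  then obtain i where i: "i*i \<le> m" "m < Suc i * Suc i" by blast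
  show ?case
  proof (cases "Suc m < Suc i * Suc i")
    case True then show ?thesis using i by (intro exI[of _ i]) simp
  next
    case False
    then have "Suc m = Suc i * Suc i" using i by linarith
    moreover have "Suc i * Suc i + 1 \<le> Suc (Suc i) * Suc (Suc i)" by simp
    ultimately show ?thesis by (intro exI[of _ "Suc i"]) linarith
  qed
qed

lemma perm_block: assumes k: "k \<ge> 1"
  shows "bij_betw (\<lambda>j. enumerate (H1 k) (m*3+j) mod 3) {1..3::nat} {0..<3}"
proof (cases "k*k \<le> m")
  case True
  then obtain d where d: "m = k*k + d" using le_Suc_ex by blast
  have kk: "k \<le> 6*(k*k)" using k by simp
  obtain A where A: "6*(k*k) = A + k" using kk le_Suc_ex[of k "6*(k*k)"] by (auto simp: add.commute)
  have sA: "6*(k*k) - k = A" using A by simp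
  have H: "\<And>j. enumerate (H1 k) (m*3+j) = (A + 3*d) + j"
  proof -
    fix j
    have idx: "m*3+j = 3*(k*k) + (3*d + j)" using d by simp
    have "enumerate (H1 k) (3*(k*k) + (3*d + j)) = A + (3*d+j)" using valT[OF k, of "3*d+j"] sA by simp
    then show "enumerate (H1 k) (m*3+j) = (A + 3*d) + j" unfolding idx by (simp add: add.assoc)
  qed
  show ?thesis by (rule consec[OF H H H])
next
  case False
  obtain i where i: "i*i \<le> m" "m < Suc i * Suc i" using sqrt_ex by blast
  have ik: "i < k"
  proof (rule ccontr)
    assume "\<not> i < k"
    then have "k*k \<le> i*i" using mult_le_mono by simp
    then show False using False i by linarith
  qed
  obtain r where r: "m = i*i + r" using i(1) le_Suc_ex by blast
  have r2: "r \<le> 2*i" using i(2) r by simp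
  have ki: "i \<le> k*i" using k by simp
  obtain a where a: "6*(k*i) = a + i" using ki le_Suc_ex[of i "6*(k*i)"] by (auto simp: add.commute)
  obtain p where p: "k = Suc p" using k by (cases k) auto
  have s1: "6*(k*i) - i = a" using a by simp
  have s2: "6*(k*i) + 3*k - i = a + 3*k" using a by simp
  have e1: "k*(i+1) = k*i + k" by simp
  show ?thesis
  proof (cases "r < i")
    case True
    have H: "enumerate (H1 k) (m*3+j) = (a + 3*r) + j" if j: "j \<le> 3" for j
    proof -
      have idx: "m*3+j = 3*(i*i) + (3*r + j)" using r by simp
      have "enumerate (H1 k) (3*(i*i) + (3*r + j)) = 6*(k*i) - i + (3*r + j)"
        by (rule valA[OF k]) (use ik True j in linarith)+
      then show ?thesis unfolding idx s1 by (simp add: add.assoc)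
    qed
    show ?thesis by (rule consec[OF H H H]) simp_all
  next
    case F1: False
    show ?thesis
    proof (cases "r < 2*i")
      case True
      obtain q where q: "r = i + q" using F1 le_Suc_ex[of i r] by auto
      have H: "enumerate (H1 k) (m*3+j) = (a + 3*p + 3*q + 2) + j" if j: "1 \<le> j" "j \<le> 3" for j
      proof -
        have idx: "m*3+j = (3*(i*i)+3*i+1) + (3*q + (j-1))" using r q j by simp
        have "enumerate (H1 k) ((3*(i*i)+3*i+1) + (3*q + (j-1))) = 6*(k*i)+3*k - i + (3*q + (j-1))"
          by (rule valB[OF k ik]) (use True q j in linarith)
        then have "enumerate (H1 k) (m*3+j) = a + 3*k + (3*q + (j-1))" unfolding idx s2 .
        also have "\<dots> = (a + 3*p + 3*q + 2) + j" using p j by linarith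
        finally show ?thesis .
      qed
      show ?thesis by (rule consec[OF H H H]) simp_all
    next
      case False
      then have rr: "r = 2*i" using r2 by simp
      have v1: "enumerate (H1 k) (m*3+1) = a + 3*k + 3*i"
      proof -
        have idx: "m*3+1 = (3*(i*i)+3*i+1) + 3*i" using r rr by simp
        have "enumerate (H1 k) ((3*(i*i)+3*i+1) + 3*i) = 6*(k*i)+3*k - i + 3*i"
          by (rule valB[OF k ik]) simp
        then show ?thesis unfolding idx s2 .
      qed
      have v2: "enumerate (H1 k) (m*3+2) = a + 3*k + 3*i + 1"
      proof -
        have idx: "m*3+2 = (3*(i*i)+3*i+1) + (3*i+1)" using r rr by simp
        have "enumerate (H1 k) ((3*(i*i)+3*i+1) + (3*i+1)) = 6*(k*i)+3*k - i + (3*i+1)"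
          by (rule valB[OF k ik]) simp
        then show ?thesis unfolding idx s2 by simp
      qed
      have v3: "enumerate (H1 k) (m*3+3) = a + 6*p + 5"
      proof -
        have idx: "m*3+3 = 3*((i+1)*(i+1))" using r rr by (simp add: algebra_simps)
        have "enumerate (H1 k) (3*((i+1)*(i+1))) = 6*(k*(i+1)) - (i+1)"
          by (rule Pval[OF k]) (use ik in linarith)
        also have "\<dots> = a + 6*p + 5" using e1 a p by linarith
        finally show ?thesis unfolding idx .
      qed
      show ?thesis
      proof (rule block_ok[of _ _ "a + 3*k + 3*i + 2"])
        show "enumerate (H1 k) (m*3+1) mod 3 = (1 + (a + 3*k + 3*i + 2)) mod 3"
          unfolding v1 by (rule mod3[of _ a "k+i" _ "k+i+1"]) (simp add: algebra_simps)+
        show "enumerate (H1 k) (m*3+2) mod 3 = (2 + (a + 3*k + 3*i + 2)) mod 3"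
          unfolding v2 by (rule mod3[of _ "a+1" "k+i" _ "k+i+1"]) (simp add: algebra_simps)+
        show "enumerate (H1 k) (m*3+3) mod 3 = (3 + (a + 3*k + 3*i + 2)) mod 3"
          unfolding v3 by (rule mod3[of _ "a+2" "2*p+1" _ "p+i+2"]) (simp add: p algebra_simps)+
      qed
    qed
  qed
qed



lemma perm3: assumes k: "k \<ge> 1" shows "perm_ns 3 (H1 k)"
proof -
  have ns: "numerical_semigroup (H1 k)"
  proof -
    have "UNIV - H1 k \<subseteq> {..<(2*(k-1)+1)*(3*k) - (k-1)}"
    proof
      fix x assume x: "x \<in> UNIV - H1 k"
      show "x \<in> {..<(2*(k-1)+1)*(3*k) - (k-1)}"
      proof (rule ccontr)
        assume "x \<notin> {..<(2*(k-1)+1)*(3*k) - (k-1)}"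
        then have "(2*(k-1)+1)*(3*k) - (k-1) \<le> x" by simp
        then have "x \<in> H1 k" by (rule part4[OF k])
        then show False using x by simp
      qed
    qed
    then have "finite (UNIV - H1 k)" using finite_subset by blast
    then show ?thesis unfolding numerical_semigroup_def using H_sub by blast
  qed
  have g1: "enumerate (H1 k) 1 = 3*k" using Qval[OF k, of 0] k by simp
  have g2: "enumerate (H1 k) 2 = 3*k+1"
  proof -
    have "enumerate (H1 k) (3*(0*0)+3*0+1 + 1) = 6*(k*0)+3*k - 0 + 1" by (rule valB[OF k]) (use k in simp_all)
    then show ?thesis by (simp add: numeral_2_eq_2)
  qed
  have g3: "enumerate (H1 k) 3 = 6*k-1" using Pval[OF k, of 1] k by simp
  have img: "enumerate (H1 k) ` {1..3} = {3*k, 3*k+1, 6*k-1}"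
  proof -
    have s: "{1..3::nat} = {1,2,3}" by auto
    show ?thesis unfolding s using g1 g2 g3 by simp
  qed
  show ?thesis unfolding perm_ns_def
    using ns gen_eq[OF k] img perm_block[OF k] by simp
qed

theorem lemma4p1:
  fixes k :: nat
  assumes "k \<ge> 1"
  defines "S \<equiv> {3*k, 3*k+1, 6*k-1}"
  shows "(submonoid_nat (H1 k) \<and> S \<subseteq> H1 k)
    \<and> (\<forall>i\<in>{0..k-1}. set_less (A_int i k) (B_int i k))
    \<and> (\<forall>i\<in>{0..k-1}. set_less (B_int i k) (A_int (i+1) k))
    \<and> ({(2*(k-1)+1)*(3*k) - (k-1) ..} \<subseteq> H1 k)
    \<and> (gen S = H1 k)
    \<and> perm_ns 3 (H1 k)"
proof (intro conjI)
  show "submonoid_nat (H1 k)" by (rule H_sub)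
  show "S \<subseteq> H1 k" unfolding S_def by (rule S_sub[OF assms(1)])
  show "\<forall>i\<in>{0..k-1}. set_less (A_int i k) (B_int i k)"
  proof
    fix i assume "i \<in> {0..k-1}"
    then have i: "i < k" using assms by auto
    have "6*(k*i)+2*i \<in> A_int i k" unfolding memA by simp
    moreover have "6*(k*i)+3*k+2*i+1 \<in> B_int i k" unfolding memB by simp
    moreover have "\<forall>x\<in>A_int i k. \<forall>y\<in>B_int i k. x < y"
    proof (intro ballI)
      fix x y assume "x \<in> A_int i k" "y \<in> B_int i k"
      then show "x < y" unfolding memA memB using i by linarith
    qed
    ultimately show "set_less (A_int i k) (B_int i k)" unfolding set_less_def by blast
  qed
  show "\<forall>i\<in>{0..k-1}. set_less (B_int i k) (A_int (i+1) k)"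
  proof
    fix i assume "i \<in> {0..k-1}"
    then have i: "i < k" using assms by auto
    have e: "k*(i+1) = k*i + k" by simp
    have "6*(k*i)+3*k+2*i+1 \<in> B_int i k" unfolding memB by simp
    moreover have "6*(k*(i+1))+2*(i+1) \<in> A_int (i+1) k" unfolding memA by simp
    moreover have "\<forall>x\<in>B_int i k. \<forall>y\<in>A_int (i+1) k. x < y"
    proof (intro ballI)
      fix x y assume "x \<in> B_int i k" "y \<in> A_int (i+1) k"
      then show "x < y" unfolding memA memB using i e by linarith
    qed
    ultimately show "set_less (B_int i k) (A_int (i+1) k)" unfolding set_less_def by blast
  qed
  show "{(2*(k-1)+1)*(3*k) - (k-1) ..} \<subseteq> H1 k" using part4[OF assms(1)] by blast
  show "gen S = H1 k" unfolding S_def by (rule gen_eq[OF assms(1)])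
  show "perm_ns 3 (H1 k)" by (rule perm3[OF assms(1)])
qed

end
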